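(* Let $\mathcal{G}=(\mathcal{V},\mathcal{E})$ be connected, $c\in\mathbb{R}^n$, $\bar c=\frac1n\sum_ic_i$. Set $x^0=c$ and for $t\ge0$ let $\lambda^t=\frac1{2m}\sum_{(i,j)\in\mathcal{E}}|x_i^t-x_j^t|$; choose $e=(i,j)\in\mathcal{E}$ uniformly at random (independently across iterations); if $x_i^t<x_j^t$ set $x_i^{t+1}=x_i^t+\lambda^t$, $x_j^{t+1}=x_j^t-\lambda^t$; otherwise set $x_i^{t+1}=x_i^t-\lambda^t$, $x_j^{t+1}=x_j^t+\lambda^t$; all other coordinates are unchanged. Then for all $k\ge0$ $$\mathbb{E}\big[\|\bar c\mathbf{1}-x^k\|^2\big]\le\Big(1-\frac{\alpha(\mathcal{G})}{2m^2}\Big)^k\|\bar c\mathbf{1}-x^0\|^2 .$$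
   Context: $\mathcal{G}$ is an undirected graph with vertices $\mathcal{V}=\{1,\dots,n\}$ and $m=|\mathcal{E}|$ edges, each edge $e=(i,j)$ having an arbitrary but fixed orientation. The Laplacian is $\mathbf{L}=\mathbf{A}^\top\mathbf{A}$, where $\mathbf{A}\in\mathbb{R}^{m\times n}$ has for edge $(i,j)$ a row with $1$ in column $i$, $-1$ in column $j$, zeros elsewhere; $\alpha(\mathcal{G})$ is the second smallest eigenvalue of $\mathbf{L}$. $\mathbf{1}$ is the all-ones vector and $\|\cdot\|$ the Euclidean norm. *)

theory Defs
  imports "Jordan_Normal_Form.Char_Poly" "HOL-Probability.Probability_Mass_Function"
begin

text \<open>Graph on vertices {0..<n}; edges given as a list Es of oriented pairs (i,j)
  (the fixed orientation of each undirected edge); m = length Es.\<close>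

definition simple_graph :: "nat \<Rightarrow> (nat \<times> nat) list \<Rightarrow> bool" where
  "simple_graph n Es \<longleftrightarrow> distinct Es \<and>
     (\<forall>(i,j)\<in>set Es. i < n \<and> j < n \<and> i \<noteq> j \<and> (j,i) \<notin> set Es)"

definition graph_connected :: "nat \<Rightarrow> (nat \<times> nat) list \<Rightarrow> bool" where
  "graph_connected n Es \<longleftrightarrow>
     (\<forall>i<n. \<forall>j<n. (i,j) \<in> (set Es \<union> (set Es)\<inverse>)\<^sup>*)"

definition incidence_mat :: "nat \<Rightarrow> (nat \<times> nat) list \<Rightarrow> real Matrix.mat" where
  "incidence_mat n Es = Matrix.mat (length Es) n
     (\<lambda>(r,k). if k = fst (Es ! r) then 1 else if k = snd (Es ! r) then -1 else 0)"

definition laplacian :: "nat \<Rightarrow> (nat \<times> nat) list \<Rightarrow> real Matrix.mat" where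
  "laplacian n Es = transpose_mat (incidence_mat n Es) * incidence_mat n Es"

text \<open>Second smallest eigenvalue of L (eigenvalues counted with algebraic multiplicity).\<close>
definition alg_conn :: "nat \<Rightarrow> (nat \<times> nat) list \<Rightarrow> real" where
  "alg_conn n Es = sorted_list_of_multiset (proots (char_poly (laplacian n Es))) ! 1"

definition step_size :: "(nat \<times> nat) list \<Rightarrow> (nat \<Rightarrow> real) \<Rightarrow> real" where
  "step_size Es x = (1 / (2 * real (length Es))) * (\<Sum>(i,j)\<leftarrow>Es. \<bar>x i - x j\<bar>)"

definition upd :: "(nat \<times> nat) list \<Rightarrow> (nat \<Rightarrow> real) \<Rightarrow> nat \<times> nat \<Rightarrow> (nat \<Rightarrow> real)" where
  "upd Es x e = (let (i,j) = e; l = step_size Es x in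
     if x i < x j then x(i := x i + l, j := x j - l) else x(i := x i - l, j := x j + l))"

primrec iterate :: "(nat \<times> nat) list \<Rightarrow> (nat \<Rightarrow> real) \<Rightarrow> nat \<Rightarrow> (nat \<Rightarrow> real) pmf" where
  "iterate Es c 0 = return_pmf c"
| "iterate Es c (Suc t) = iterate Es c t \<bind> (\<lambda>x. map_pmf (upd Es x) (pmf_of_set (set Es)))"

end

theory Submission
  imports Defs
begin

no_notation Finite_Cartesian_Product.vec.vec_nth (infixl "$" 90)
no_notation Inner_Product.real_inner_class.inner (infix "\<bullet>" 70)

lemma real_sym_eigen:
  fixes S :: "real mat"
  assumes S: "S \<in> carrier_mat n n" and sym: "transpose_mat S = S" and n: "n > 0"
  shows "\<exists>\<mu> v. v \<in> carrier_vec n \<and> v \<noteq> 0\<^sub>v n \<and> S *\<^sub>v v = \<mu> \<cdot>\<^sub>v v"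
proof -
  let ?Sc = "map_mat complex_of_real S"
  have Sc: "?Sc \<in> carrier_mat n n" using S by simp
  obtain as where cp: "char_poly ?Sc = (\<Prod>a\<leftarrow>as. [:- a, 1:])" and las: "length as = n"
    using char_poly_factorized[OF Sc] by blast
  from las n obtain a as' where as: "as = a # as'" by (cases as) auto
  have "poly (char_poly ?Sc) a = 0" unfolding cp as by simp
  hence "eigenvalue ?Sc a" using eigenvalue_root_char_poly[OF Sc] by simp
  then obtain w where ev: "eigenvector ?Sc w a" unfolding eigenvalue_def by blast
  hence w: "w \<in> carrier_vec n" and w0: "w \<noteq> 0\<^sub>v n" and eq: "?Sc *\<^sub>v w = a \<cdot>\<^sub>v w"
    unfolding eigenvector_def using Sc by auto
  have Sij: "S $$ (i,j) = S $$ (j,i)" if "i < n" "j < n" for i j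
    using sym that S by (metis carrier_matD index_transpose_mat(1))
  define z where "z = (\<Sum>i<n. cnj (w $ i) * (\<Sum>j<n. complex_of_real (S $$ (i,j)) * w $ j))"
  define N where "N = (\<Sum>i<n. cnj (w $ i) * w $ i)"
  have Swi: "(?Sc *\<^sub>v w) $ i = (\<Sum>j<n. complex_of_real (S $$ (i,j)) * w $ j)" if "i < n" for i
    using that S w by (auto simp: scalar_prod_def lessThan_atLeast0 intro!: sum.cong)
  have zN: "z = a * N"
  proof -
    have "z = (\<Sum>i<n. cnj (w $ i) * (a * w $ i))"
      unfolding z_def
      using Swi eq w by (auto intro!: sum.cong simp del: index_mult_mat_vec)
    thus ?thesis unfolding N_def by (simp add: sum_distrib_left algebra_simps)
  qed
  have "cnj z = (\<Sum>i<n. w $ i * (\<Sum>j<n. complex_of_real (S $$ (i,j)) * cnj (w $ j)))"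
    unfolding z_def by (simp add: cnj_sum)
  also have "\<dots> = (\<Sum>i<n. \<Sum>j<n. w $ i * complex_of_real (S $$ (i,j)) * cnj (w $ j))"
    by (simp add: sum_distrib_left mult.assoc)
  also have "\<dots> = (\<Sum>j<n. \<Sum>i<n. w $ i * complex_of_real (S $$ (i,j)) * cnj (w $ j))"
    by (rule sum.swap)
  also have "\<dots> = (\<Sum>j<n. cnj (w $ j) * (\<Sum>i<n. complex_of_real (S $$ (j,i)) * w $ i))"
    by (auto simp: sum_distrib_left Sij intro!: sum.cong)
  also have "\<dots> = z" unfolding z_def ..
  finally have cz: "cnj z = z" .
  have cN: "cnj N = N" unfolding N_def by (simp add: cnj_sum mult.commute)
  have "N \<noteq> 0"
  proof
    assume N0: "N = 0"
    from w0 w obtain i where i: "i < n" "w $ i \<noteq> 0" by (metis carrier_vecD eq_vecI index_zero_vec(1,2))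
    have "N = (\<Sum>i<n. complex_of_real ((cmod (w $ i))\<^sup>2))"
      unfolding N_def by (intro sum.cong refl) (metis complex_norm_square mult.commute of_real_power)
    hence "Re N = (\<Sum>i<n. (cmod (w $ i))\<^sup>2)" by (simp add: Re_sum)
    also have "\<dots> > 0"
      by (rule sum_pos2[where i=i], use i in auto)
    finally show False using N0 by simp
  qed
  from zN have "cnj z = cnj a * N" using cN by simp
  with cz zN \<open>N \<noteq> 0\<close> have "cnj a = a" by simp
  hence "Im (cnj a) = Im a" by simp
  hence "Im a = 0" by simp
  hence a: "a = complex_of_real (Re a)" by (simp add: complex_eq_iff)
  have "poly (char_poly ?Sc) (complex_of_real (Re a)) = 0" using \<open>poly (char_poly ?Sc) a = 0\<close> a by simp
  hence "complex_of_real (poly (char_poly S) (Re a)) = 0"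
    by (simp add: of_real_hom.char_poly_hom[OF S] of_real_hom.poly_map_poly)
  hence "eigenvalue S (Re a)" using eigenvalue_root_char_poly[OF S] by simp
  then obtain v where "eigenvector S v (Re a)" unfolding eigenvalue_def by blast
  thus ?thesis unfolding eigenvector_def using S by auto
qed

lemma ifm1[simp]: "(if P then 1 else 0) * (x::real) = (if P then x else 0)" by simp
lemma ifm3[simp]: "(c::real) * (if P then x else 0) = (if P then c * x else 0)" by simp
lemma ifm2[simp]: "(x::real) * (if P then 1 else 0) = (if P then x else 0)" by simp

lemma householder:
  fixes u :: "real Matrix.vec"
  assumes u: "u \<in> carrier_vec N" and uu: "u \<bullet> u = 1" and N: "N > 0"
  shows "\<exists>H. H \<in> carrier_mat N N \<and> transpose_mat H = H \<and> H * H = 1\<^sub>m N \<and> H *\<^sub>v u = unit_vec N 0"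
proof (cases "u = unit_vec N 0")
  case True
  thus ?thesis by (intro exI[of _ "1\<^sub>m N"]) (use u in auto)
next
  case False
  define w where "w = (\<lambda>i. u $ i - (if i = 0 then 1 else 0::real))"
  define s where "s = (\<Sum>k = 0..<N. w k * w k)"
  define t where "t = (\<Sum>k = 0..<N. w k * u $ k)"
  have uu': "(\<Sum>k = 0..<N. u $ k * u $ k) = 1" using uu u by (simp add: scalar_prod_def)
  have t: "t = 1 - u $ 0"
    unfolding t_def w_def by (simp add: algebra_simps sum_subtractf uu' N)
  have s: "s = 2 * t"
    unfolding s_def t t_def w_def by (simp add: algebra_simps sum_subtractf sum.distrib uu' N)
  have "\<exists>i<N. w i \<noteq> 0"
  proof (rule ccontr)
    assume "\<not> ?thesis"
    hence "u = unit_vec N 0" using u by (intro eq_vecI) (auto simp: w_def unit_vec_def)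
    with False show False by simp
  qed
  then obtain i where i: "i < N" "w i \<noteq> 0" by blast
  have "s > 0" unfolding s_def by (rule sum_pos2[where i=i]) (use i in \<open>auto simp: zero_less_mult_iff linorder_neq_iff\<close>)
  define c where "c = 2 / s"
  have ct: "c * t = 1" using \<open>s > 0\<close> s unfolding c_def by simp
  have cs: "c * c * s = 2 * c" using \<open>s > 0\<close> unfolding c_def by (simp add: field_simps power2_eq_square)
  define H where "H = Matrix.mat N N (\<lambda>(i,j). (if i = j then 1 else 0) - c * (w i * w j))"
  have H: "H \<in> carrier_mat N N" unfolding H_def by simp
  have HT: "transpose_mat H = H" unfolding H_def by (intro eq_matI) auto
  have HH: "H * H = 1\<^sub>m N"
  proof (intro eq_matI)
    fix i j assume ij: "i < dim_row (1\<^sub>m N)" "j < dim_col (1\<^sub>m N)"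
    hence ij': "i < N" "j < N" by auto
    have "(H * H) $$ (i,j) = (\<Sum>k = 0..<N. ((if i = k then 1 else 0) - c * (w i * w k)) * ((if k = j then 1 else 0) - c * (w k * w j)))"
      using ij' by (simp add: H_def scalar_prod_def)
    also have "\<dots> = (\<Sum>k = 0..<N. (if i = k then 1 else 0) * (if k = j then 1 else 0))
       - c * w i * (\<Sum>k = 0..<N. (if k = j then 1 else 0) * w k)
       - c * w j * (\<Sum>k = 0..<N. (if i = k then 1 else 0) * w k)
       + c * c * w i * w j * s"
      unfolding s_def by (simp add: algebra_simps sum_subtractf sum.distrib sum_distrib_left)
    also have "\<dots> = (if i = j then 1 else 0) - 2 * c * w i * w j + c * c * s * w i * w j"
      using ij' by (simp add:)
    also have "\<dots> = (if i = j then 1 else 0)" using cs by simp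
    finally show "(H * H) $$ (i,j) = 1\<^sub>m N $$ (i,j)" using ij' by simp
  qed (use H in auto)
  have Hu: "H *\<^sub>v u = unit_vec N 0"
  proof (intro eq_vecI)
    fix i assume "i < dim_vec (unit_vec N 0)"
    hence i: "i < N" by simp
    have "(H *\<^sub>v u) $ i = (\<Sum>k = 0..<N. ((if i = k then 1 else 0) - c * (w i * w k)) * u $ k)"
      using i u by (simp add: H_def scalar_prod_def)
    also have "\<dots> = u $ i - c * w i * t"
      unfolding t_def using i by (simp add: algebra_simps sum_subtractf sum_distrib_left)
    also have "\<dots> = u $ i - w i" using ct by (simp add: mult.commute mult.left_commute)
    also have "\<dots> = unit_vec N 0 $ i" using i by (simp add: w_def unit_vec_def)
    finally show "(H *\<^sub>v u) $ i = unit_vec N 0 $ i" .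
  qed (use H in auto)
  show ?thesis using H HT HH Hu by blast
qed

definition diagm :: "real list \<Rightarrow> real mat" where
  "diagm ds = Matrix.mat (length ds) (length ds) (\<lambda>(i,j). if i = j then ds ! i else 0)"

lemma diagm_carrier[simp]: "diagm ds \<in> carrier_mat (length ds) (length ds)"
  by (simp add: diagm_def)

lemma zero_mult_diagm[simp]: "0\<^sub>m a (length ds) * diagm ds = 0\<^sub>m a (length ds)"
  using left_mult_zero_mat[OF diagm_carrier[of ds], of a] by simp

lemma sprod_self_pos:
  fixes v :: "real Matrix.vec"
  assumes v: "v \<in> carrier_vec n" and v0: "v \<noteq> 0\<^sub>v n"
  shows "v \<bullet> v > 0"
proof -
  from v0 v obtain i where i: "i < n" "v $ i \<noteq> 0" by (metis carrier_vecD eq_vecI index_zero_vec(1,2))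
  have "v \<bullet> v = (\<Sum>k = 0..<n. v $ k * v $ k)" using v by (simp add: scalar_prod_def)
  also have "\<dots> > 0" by (rule sum_pos2[where i=i]) (use i in \<open>auto simp: zero_less_mult_iff linorder_neq_iff\<close>)
  finally show ?thesis .
qed

theorem spectral:
  fixes S :: "real mat"
  assumes "S \<in> carrier_mat n n" "transpose_mat S = S"
  shows "\<exists>Q ds. Q \<in> carrier_mat n n \<and> length ds = n \<and> transpose_mat Q * Q = 1\<^sub>m n
           \<and> S = Q * diagm ds * transpose_mat Q"
  using assms
proof (induction n arbitrary: S)
  case 0
  show ?case
    by (intro exI[of _ "1\<^sub>m 0"] exI[of _ "[]"]) (use 0 in \<open>auto intro!: eq_matI simp: diagm_def\<close>)
next
  case (Suc n')
  let ?n = "Suc n'"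
  have S: "S \<in> carrier_mat ?n ?n" and ST: "transpose_mat S = S" by fact+
  obtain \<mu> v where v: "v \<in> carrier_vec ?n" and v0: "v \<noteq> 0\<^sub>v ?n" and Sv: "S *\<^sub>v v = \<mu> \<cdot>\<^sub>v v"
    using real_sym_eigen[OF S ST] by blast
  have vv: "v \<bullet> v > 0" by (rule sprod_self_pos[OF v v0])
  define u where "u = (1 / sqrt (v \<bullet> v)) \<cdot>\<^sub>v v"
  have u: "u \<in> carrier_vec ?n" unfolding u_def using v by simp
  have uu: "u \<bullet> u = 1"
    unfolding u_def using v vv by (simp add: smult_scalar_prod_distrib scalar_prod_smult_distrib real_sqrt_mult[symmetric])
  have Su: "S *\<^sub>v u = \<mu> \<cdot>\<^sub>v u"
    unfolding u_def using S v by (simp add: mult_mat_vec Sv smult_smult_assoc mult.commute)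
  obtain H where H: "H \<in> carrier_mat ?n ?n" and HT: "transpose_mat H = H" and HH: "H * H = 1\<^sub>m ?n"
    and Hu: "H *\<^sub>v u = unit_vec ?n 0"
    using householder[OF u uu] by auto
  define A' where "A' = H * S * H"
  have A': "A' \<in> carrier_mat ?n ?n" unfolding A'_def using H S by simp
  have A'T: "transpose_mat A' = A'"
  proof -
    have "transpose_mat (H * S * H) = transpose_mat H * transpose_mat (H * S)"
      by (rule transpose_mult[of _ ?n ?n]) (use H S in auto)
    also have "\<dots> = H * (S * H)" using transpose_mult[of H ?n ?n S ?n] H S HT ST by simp
    also have "\<dots> = H * S * H" using H S by (simp add: assoc_mult_mat[of _ ?n ?n _ ?n _ ?n])
    finally show ?thesis unfolding A'_def .
  qed
  have He: "H *\<^sub>v unit_vec ?n 0 = u"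
  proof -
    have "H *\<^sub>v unit_vec ?n 0 = (H * H) *\<^sub>v u" using H u by (simp add: assoc_mult_mat_vec[of _ ?n ?n _ ?n] Hu)
    also have "\<dots> = u" using HH u by simp
    finally show ?thesis .
  qed
  have A'e: "A' *\<^sub>v unit_vec ?n 0 = \<mu> \<cdot>\<^sub>v unit_vec ?n 0"
  proof -
    have "A' *\<^sub>v unit_vec ?n 0 = H *\<^sub>v (S *\<^sub>v (H *\<^sub>v unit_vec ?n 0))"
      unfolding A'_def using H S by (simp add: assoc_mult_mat_vec[of _ ?n ?n _ ?n])
    also have "\<dots> = \<mu> \<cdot>\<^sub>v (H *\<^sub>v u)" using He Su H u by (simp add: mult_mat_vec)
    also have "\<dots> = \<mu> \<cdot>\<^sub>v unit_vec ?n 0" using Hu by simp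
    finally show ?thesis .
  qed
  have col0: "A' $$ (i, 0) = (if i = 0 then \<mu> else 0)" if "i < ?n" for i
  proof -
    have "A' $$ (i, 0) = (A' *\<^sub>v unit_vec ?n 0) $ i" using that A' by (simp add: scalar_prod_right_unit)
    also have "\<dots> = (if i = 0 then \<mu> else 0)" using A'e that by (simp add: unit_vec_def)
    finally show ?thesis .
  qed
  have A'sym: "A' $$ (i, j) = A' $$ (j, i)" if "i < ?n" "j < ?n" for i j
    using A'T that A' by (metis carrier_matD index_transpose_mat(1))
  define A3 where "A3 = Matrix.mat n' n' (\<lambda>(i,j). A' $$ (Suc i, Suc j))"
  have A3: "A3 \<in> carrier_mat n' n'" unfolding A3_def by simp
  have A3T: "transpose_mat A3 = A3" unfolding A3_def by (intro eq_matI) (auto simp: A'sym)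
  obtain Q3 ds3 where Q3: "Q3 \<in> carrier_mat n' n'" and ds3: "length ds3 = n'"
    and Q3Q3: "transpose_mat Q3 * Q3 = 1\<^sub>m n'" and A3eq: "A3 = Q3 * diagm ds3 * transpose_mat Q3"
    using Suc.IH[OF A3 A3T] by blast
  have D3: "diagm ds3 \<in> carrier_mat n' n'" using diagm_carrier[of ds3] ds3 by simp
  define M where "M = Matrix.mat 1 1 (\<lambda>_. \<mu>)"
  have M: "M \<in> carrier_mat 1 1" unfolding M_def by simp
  define B where "B = four_block_mat (1\<^sub>m 1) (0\<^sub>m 1 n') (0\<^sub>m n' 1) Q3"
  have B: "B \<in> carrier_mat ?n ?n" unfolding B_def using Q3 by auto
  have BT: "transpose_mat B = four_block_mat (1\<^sub>m 1) (0\<^sub>m 1 n') (0\<^sub>m n' 1) (transpose_mat Q3)"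
    unfolding B_def using Q3 by (subst transpose_four_block_mat) auto
  have BTB: "transpose_mat B * B = 1\<^sub>m ?n"
    unfolding BT unfolding B_def using Q3 Q3Q3
    by (subst mult_four_block_mat[of _ 1 1 _ n' _ n' _ _ 1 _ n']) auto
  have D: "diagm (\<mu> # ds3) = four_block_mat M (0\<^sub>m 1 n') (0\<^sub>m n' 1) (diagm ds3)"
    unfolding M_def using ds3 by (intro eq_matI) (auto simp: diagm_def)
  have A'eq: "A' = four_block_mat M (0\<^sub>m 1 n') (0\<^sub>m n' 1) A3"
  proof (intro eq_matI)
    fix i j assume ij: "i < dim_row (four_block_mat M (0\<^sub>m 1 n') (0\<^sub>m n' 1) A3)"
      "j < dim_col (four_block_mat M (0\<^sub>m 1 n') (0\<^sub>m n' 1) A3)"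
    hence ij': "i < ?n" "j < ?n" using M A3 by auto
    show "A' $$ (i, j) = four_block_mat M (0\<^sub>m 1 n') (0\<^sub>m n' 1) A3 $$ (i, j)"
    proof (cases "i = 0 \<or> j = 0")
      case True
      thus ?thesis using ij' M A3 col0 col0[of 0] A'sym[of i j] by (auto simp: M_def)
    next
      case False
      then obtain i' j' where "i = Suc i'" "j = Suc j'" by (metis not0_implies_Suc)
      thus ?thesis using ij' M A3 by (auto simp: A3_def)
    qed
  qed (use A' M A3 in auto)
  have BDB: "B * diagm (\<mu> # ds3) * transpose_mat B = A'"
  proof -
    have "B * diagm (\<mu> # ds3) = four_block_mat M (0\<^sub>m 1 n') (0\<^sub>m n' 1) (Q3 * diagm ds3)"
      unfolding B_def D using Q3 M ds3
      by (subst mult_four_block_mat[of _ 1 1 _ n' _ n' _ _ 1 _ n']) auto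
    also have "\<dots> * transpose_mat B = four_block_mat M (0\<^sub>m 1 n') (0\<^sub>m n' 1) (Q3 * diagm ds3 * transpose_mat Q3)"
      unfolding BT using Q3 M ds3 mult_carrier_mat[OF Q3 D3]
        mult_carrier_mat[OF mult_carrier_mat[OF Q3 D3] transpose_carrier_mat[THEN iffD2, OF Q3]]
      by (subst mult_four_block_mat[of _ 1 1 _ n' _ n' _ _ 1 _ n']) auto
    also have "\<dots> = A'" unfolding A'eq A3eq ..
    finally show ?thesis .
  qed
  define Q where "Q = H * B"
  have Q: "Q \<in> carrier_mat ?n ?n" unfolding Q_def using H B by simp
  have QT: "transpose_mat Q = transpose_mat B * H" unfolding Q_def using H B by (simp add: transpose_mult HT)
  have D': "diagm (\<mu> # ds3) \<in> carrier_mat ?n ?n" using diagm_carrier[of "\<mu> # ds3"] ds3 by simp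
  have BT': "transpose_mat B \<in> carrier_mat ?n ?n" using B by simp
  have "transpose_mat Q * Q = transpose_mat B * (H * H) * B"
    unfolding QT unfolding Q_def using H B BT' by (simp add: assoc_mult_mat[of _ ?n ?n _ ?n _ ?n])
  also have "\<dots> = 1\<^sub>m ?n" using HH BTB B BT' by simp
  finally have QQ: "transpose_mat Q * Q = 1\<^sub>m ?n" .
  have "Q * diagm (\<mu> # ds3) * transpose_mat Q = H * (B * diagm (\<mu> # ds3) * transpose_mat B) * H"
    unfolding QT unfolding Q_def using H B BT' D' by (simp add: assoc_mult_mat[of _ ?n ?n _ ?n _ ?n])
  also have "\<dots> = (H * H) * S * (H * H)"
    unfolding BDB A'_def using H S by (simp add: assoc_mult_mat[of _ ?n ?n _ ?n _ ?n])
  also have "\<dots> = S" using HH S by simp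
  finally have "S = Q * diagm (\<mu> # ds3) * transpose_mat Q" ..
  thus ?case using Q QQ ds3 by (intro exI[of _ Q] exI[of _ "\<mu> # ds3"]) auto
qed

lemma ifm4: "(if P then x else 0) * (y::real) = (if P then x * y else 0)" by simp

lemma mv_zero: "(A :: real mat) \<in> carrier_mat nr nc \<Longrightarrow> A *\<^sub>v 0\<^sub>v nc = 0\<^sub>v nr"
  by (intro eq_vecI) (auto simp: scalar_prod_def)

lemma proots_linear_prod: "proots (\<Prod>a\<leftarrow>ds. [:- a, 1:]) = mset (ds :: real list)"
proof (induction ds)
  case (Cons a ds)
  have "(\<Prod>a\<leftarrow>ds. [:- a, 1:]) \<noteq> (0 :: real poly)" by (auto simp: prod_list_zero_iff)
  hence "proots ([:- a, 1:] * (\<Prod>a\<leftarrow>ds. [:- a, 1:])) = proots [:- a, 1:] + proots (\<Prod>a\<leftarrow>ds. [:- a, 1:])"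
    by (intro proots_mult) auto
  also have "proots [:- a, 1:] = {#a#}" using proots_linear_factor[of "-a"] by simp
  finally show ?case using Cons by simp
qed simp

lemma char_poly_diagm:
  assumes L: "L \<in> carrier_mat n n" and Q: "Q \<in> carrier_mat n n" and ds: "length ds = n"
    and QQ: "transpose_mat Q * Q = 1\<^sub>m n" and Leq: "L = Q * diagm ds * transpose_mat Q"
  shows "char_poly L = (\<Prod>a\<leftarrow>ds. [:- a, 1:])"
proof -
  have QQ': "Q * transpose_mat Q = 1\<^sub>m n" using mat_mult_left_right_inverse[OF _ Q QQ] Q by simp
  have D: "diagm ds \<in> carrier_mat n n" using diagm_carrier[of ds] ds by simp
  have "similar_mat_wit L (diagm ds) Q (transpose_mat Q)"
    unfolding similar_mat_wit_def Let_def using L Q D QQ QQ' Leq by auto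
  hence "similar_mat L (diagm ds)" unfolding similar_mat_def by blast
  hence "char_poly L = char_poly (diagm ds)" by (rule char_poly_similar)
  also have "\<dots> = (\<Prod>a\<leftarrow>diag_mat (diagm ds). [:- a, 1:])"
    by (rule char_poly_upper_triangular[OF D]) (auto simp: upper_triangular_def diagm_def)
  also have "diag_mat (diagm ds) = ds"
    by (rule nth_equalityI) (auto simp: diag_mat_def diagm_def)
  finally show ?thesis .
qed

lemma sorted_second_count:
  fixes ds :: "real list"
  shows "card {i. i < length ds \<and> ds ! i < sort ds ! 1} \<le> 1"
proof -
  let ?s = "sort ds" and ?P = "\<lambda>x. x < sort ds ! 1"
  have "card {i. i < length ds \<and> ?P (ds ! i)} = length (filter ?P ds)"
    by (simp add: length_filter_conv_card)
  also have "\<dots> = length (filter ?P ?s)" by (simp add: filter_sort)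
  also have "\<dots> = card {j. j < length ?s \<and> ?P (?s ! j)}" by (simp add: length_filter_conv_card)
  also have "\<dots> \<le> card {0::nat}"
  proof (rule card_mono)
    show "{j. j < length ?s \<and> ?P (?s ! j)} \<subseteq> {0}"
    proof
      fix j assume j: "j \<in> {j. j < length ?s \<and> ?P (?s ! j)}"
      show "j \<in> {0}"
      proof (rule ccontr)
        assume "j \<notin> {0}"
        hence "1 \<le> j" by auto
        hence "?s ! 1 \<le> ?s ! j" using j by (intro sorted_nth_mono) auto
        with j show False by auto
      qed
    qed
  qed simp
  finally show ?thesis by simp
qed

lemma rayleigh:
  fixes L :: "real mat"
  assumes L: "L \<in> carrier_mat n n" and LT: "transpose_mat L = L"
    and psd: "\<And>x. x \<in> carrier_vec n \<Longrightarrow> x \<bullet> (L *\<^sub>v x) \<ge> 0"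
    and ker: "L *\<^sub>v Matrix.vec n (\<lambda>_. 1) = 0\<^sub>v n" and n: "n > 0"
    and y: "y \<in> carrier_vec n" and y1: "y \<bullet> Matrix.vec n (\<lambda>_. 1) = 0"
  shows "sorted_list_of_multiset (proots (char_poly L)) ! 1 * (y \<bullet> y) \<le> y \<bullet> (L *\<^sub>v y)"
proof -
  obtain Q ds where Q: "Q \<in> carrier_mat n n" and ds: "length ds = n" and QQ: "transpose_mat Q * Q = 1\<^sub>m n"
    and Leq: "L = Q * diagm ds * transpose_mat Q"
    using spectral[OF L LT] by blast
  have QQ': "Q * transpose_mat Q = 1\<^sub>m n" using mat_mult_left_right_inverse[OF _ Q QQ] Q by simp
  have QT: "transpose_mat Q \<in> carrier_mat n n" using Q by simp
  define D where "D = diagm ds"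
  have D: "D \<in> carrier_mat n n" using diagm_carrier[of ds] ds by (simp add: D_def)
  have "sorted_list_of_multiset (proots (char_poly L)) = sort ds"
    using char_poly_diagm[OF L Q ds QQ Leq] by (simp add: proots_linear_prod)
  hence alpha: "sorted_list_of_multiset (proots (char_poly L)) ! 1 = sort ds ! 1" by simp
  define \<alpha> where "\<alpha> = sort ds ! 1"
  let ?one = "Matrix.vec n (\<lambda>_. 1::real)"
  have one: "?one \<in> carrier_vec n" by simp
  have Lx: "L *\<^sub>v x = Q *\<^sub>v (D *\<^sub>v (transpose_mat Q *\<^sub>v x))" if x: "x \<in> carrier_vec n" for x
    unfolding Leq D_def[symmetric] using Q D QT x
    by (simp add: assoc_mult_mat_vec[of _ n n _ n])
  have form: "x \<bullet> (L *\<^sub>v x) = (transpose_mat Q *\<^sub>v x) \<bullet> (D *\<^sub>v (transpose_mat Q *\<^sub>v x))"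
    if x: "x \<in> carrier_vec n" for x
    unfolding Lx[OF x] using transpose_vec_mult_scalar[OF Q _ x, of "D *\<^sub>v (transpose_mat Q *\<^sub>v x)"] D QT x
    by simp
  have QQx: "Q *\<^sub>v (transpose_mat Q *\<^sub>v x) = x" if x: "x \<in> carrier_vec n" for x
    using assoc_mult_mat_vec[OF Q QT x, symmetric] QQ' x by simp
  have QTQx: "transpose_mat Q *\<^sub>v (Q *\<^sub>v x) = x" if x: "x \<in> carrier_vec n" for x
    using assoc_mult_mat_vec[OF QT Q x, symmetric] QQ x by simp
  have inner: "(transpose_mat Q *\<^sub>v x) \<bullet> (transpose_mat Q *\<^sub>v u) = x \<bullet> u"
    if x: "x \<in> carrier_vec n" and u: "u \<in> carrier_vec n" for x u
    using transpose_vec_mult_scalar[OF Q _ x, of "transpose_mat Q *\<^sub>v u"] QQx[OF u] QT u by simp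
  define z where "z = transpose_mat Q *\<^sub>v y"
  define w where "w = transpose_mat Q *\<^sub>v ?one"
  have z: "z \<in> carrier_vec n" and w: "w \<in> carrier_vec n" unfolding z_def w_def using mult_mat_vec_carrier[OF QT y] mult_mat_vec_carrier[OF QT one] by auto
  have Dv: "(D *\<^sub>v u) $ i = ds ! i * u $ i" if "i < n" "u \<in> carrier_vec n" for u i
    using that ds by (simp add: D_def diagm_def scalar_prod_def ifm4)
  have Dform: "u \<bullet> (D *\<^sub>v u) = (\<Sum>i = 0..<n. ds ! i * (u $ i)^2)" if "u \<in> carrier_vec n" for u :: "real Matrix.vec"
    using that D Dv by (simp add: scalar_prod_def power2_eq_square algebra_simps)
  have sq: "u \<bullet> u = (\<Sum>i = 0..<n. (u $ i)^2)" if "u \<in> carrier_vec n" for u :: "real Matrix.vec"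
    using that by (simp add: scalar_prod_def power2_eq_square)
  have lhs: "y \<bullet> (L *\<^sub>v y) = (\<Sum>i = 0..<n. ds ! i * (z $ i)^2)"
    using form[OF y] Dform[OF z] unfolding z_def by simp
  have rhs: "y \<bullet> y = (\<Sum>i = 0..<n. (z $ i)^2)"
    using inner[OF y y] sq[OF z] unfolding z_def by simp
  have "z \<bullet> w = y \<bullet> ?one" unfolding z_def w_def by (rule inner[OF y one])
  hence "z \<bullet> w = 0" using y1 by simp
  hence zw: "(\<Sum>i = 0..<n. z $ i * w $ i) = 0" using w by (simp add: scalar_prod_def)
  have dpos: "ds ! i \<ge> 0" if i: "i < n" for i
  proof -
    let ?q = "Q *\<^sub>v unit_vec n i"
    have q: "?q \<in> carrier_vec n" using Q by simp
    have "0 \<le> ?q \<bullet> (L *\<^sub>v ?q)" by (rule psd[OF q])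
    also have "\<dots> = unit_vec n i \<bullet> (D *\<^sub>v unit_vec n i)"
      using form[OF q] QTQx[of "unit_vec n i"] by simp
    also have "\<dots> = ds ! i" using Dform[of "unit_vec n i"] i
      by (simp add: unit_vec_def power2_eq_square sum.delta cong: if_cong)
    finally show ?thesis .
  qed
  have Dw: "ds ! i * w $ i = 0" if i: "i < n" for i
  proof -
    have "D *\<^sub>v w = transpose_mat Q *\<^sub>v (L *\<^sub>v ?one)"
    proof -
      have "L *\<^sub>v ?one = Q *\<^sub>v (D *\<^sub>v w)" using Lx[OF one] unfolding w_def .
      hence "transpose_mat Q *\<^sub>v (L *\<^sub>v ?one) = D *\<^sub>v w" using QTQx[of "D *\<^sub>v w"] D w by simp
      thus ?thesis by simp
    qed
    also have "\<dots> = 0\<^sub>v n" using ker QT by (auto intro!: eq_vecI simp: scalar_prod_def)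
    finally have "(D *\<^sub>v w) $ i = 0" using i by simp
    thus ?thesis using Dv[OF i w] by simp
  qed
  have "\<exists>i<n. w $ i \<noteq> 0"
  proof (rule ccontr)
    assume "\<not> ?thesis"
    hence "w = 0\<^sub>v n" using w by (intro eq_vecI) auto
    hence "?one = 0\<^sub>v n" using QQx[OF one] Q mv_zero[OF Q] unfolding w_def by simp
    hence "?one $ 0 = (0\<^sub>v n :: real Matrix.vec) $ 0" by simp
    thus False using n by simp
  qed
  then obtain i0 where i0: "i0 < n" "w $ i0 \<noteq> 0" by blast
  show ?thesis
    unfolding alpha \<alpha>_def[symmetric] lhs rhs
  proof (cases "\<alpha> \<le> 0")
    case True
    have "\<alpha> * (\<Sum>i = 0..<n. (z $ i)^2) \<le> 0"
      using True by (simp add: mult_nonpos_nonneg sum_nonneg)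
    also have "\<dots> \<le> (\<Sum>i = 0..<n. ds ! i * (z $ i)^2)"
      using dpos by (intro sum_nonneg) simp
    finally show "\<alpha> * (\<Sum>i = 0..<n. (z $ i)^2) \<le> (\<Sum>i = 0..<n. ds ! i * (z $ i)^2)" .
  next
    case False
    hence apos: "\<alpha> > 0" by simp
    have d0: "ds ! i0 = 0" using Dw[OF i0(1)] i0(2) by simp
    have big: "ds ! j \<ge> \<alpha>" if j: "j < n" "j \<noteq> i0" for j
    proof (rule ccontr)
      assume "\<not> ?thesis"
      hence "{i0, j} \<subseteq> {i. i < length ds \<and> ds ! i < \<alpha>}" using j i0 d0 apos ds by auto
      hence "card {i0, j} \<le> card {i. i < length ds \<and> ds ! i < \<alpha>}"
        by (intro card_mono) auto
      also have "\<dots> \<le> 1" using sorted_second_count[of ds] unfolding \<alpha>_def .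
      finally show False using j by simp
    qed
    have wj: "w $ j = 0" if j: "j < n" "j \<noteq> i0" for j
      using Dw[OF j(1)] big[OF j] apos by simp
    have "(\<Sum>i = 0..<n. z $ i * w $ i) = z $ i0 * w $ i0 + (\<Sum>i \<in> {0..<n} - {i0}. z $ i * w $ i)"
      using i0 by (simp add: sum.remove)
    also have "(\<Sum>i \<in> {0..<n} - {i0}. z $ i * w $ i) = 0" using wj by (intro sum.neutral) auto
    finally have "z $ i0 * w $ i0 = 0" using zw by simp
    hence zi0: "z $ i0 = 0" using i0 by simp
    have "\<alpha> * (\<Sum>i = 0..<n. (z $ i)^2) = (\<Sum>i = 0..<n. \<alpha> * (z $ i)^2)" by (simp add: sum_distrib_left)
    also have "\<dots> \<le> (\<Sum>i = 0..<n. ds ! i * (z $ i)^2)"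
    proof (rule sum_mono)
      fix i assume "i \<in> {0..<n}"
      thus "\<alpha> * (z $ i)^2 \<le> ds ! i * (z $ i)^2"
        using zi0 big[of i] by (cases "i = i0") (auto intro: mult_right_mono)
    qed
    finally show "\<alpha> * (\<Sum>i = 0..<n. (z $ i)^2) \<le> (\<Sum>i = 0..<n. ds ! i * (z $ i)^2)" .
  qed
qed

lemma inc_carrier: "incidence_mat n Es \<in> carrier_mat (length Es) n"
  by (simp add: incidence_mat_def)

lemma lap_carrier: "laplacian n Es \<in> carrier_mat n n"
  unfolding laplacian_def using inc_carrier[of n Es] by simp

lemma lap_sym: "transpose_mat (laplacian n Es) = laplacian n Es"
  unfolding laplacian_def using inc_carrier[of n Es]
  by (simp add: transpose_mult[of _ n "length Es" _ n])

lemma edge_props: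
  assumes "simple_graph n Es" "e \<in> set Es"
  shows "fst e < n" "snd e < n" "fst e \<noteq> snd e"
  using assms unfolding simple_graph_def by auto

lemma inc_mult:
  assumes g: "simple_graph n Es" and x: "x \<in> carrier_vec n" and r: "r < length Es"
  shows "(incidence_mat n Es *\<^sub>v x) $ r = x $ fst (Es ! r) - x $ snd (Es ! r)"
proof -
  have e: "Es ! r \<in> set Es" using r by simp
  let ?a = "fst (Es ! r)" and ?b = "snd (Es ! r)"
  have ab: "?a < n" "?b < n" "?a \<noteq> ?b" using edge_props[OF g e] by auto
  have "(incidence_mat n Es *\<^sub>v x) $ r =
     (\<Sum>k = 0..<n. (if k = ?a then 1 else if k = ?b then -1 else 0) * x $ k)"
    using r x by (simp add: incidence_mat_def scalar_prod_def)
  also have "\<dots> = (\<Sum>k = 0..<n. (if k = ?a then x $ k else 0) - (if k = ?b then x $ k else 0))"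
    using ab by (intro sum.cong) auto
  also have "\<dots> = x $ ?a - x $ ?b" using ab by (simp add: sum_subtractf)
  finally show ?thesis .
qed

lemma lap_form:
  assumes g: "simple_graph n Es" and x: "x \<in> carrier_vec n"
  shows "x \<bullet> (laplacian n Es *\<^sub>v x) = (\<Sum>r = 0..<length Es. (x $ fst (Es ! r) - x $ snd (Es ! r))^2)"
proof -
  let ?A = "incidence_mat n Es"
  have A: "?A \<in> carrier_mat (length Es) n" by (rule inc_carrier)
  have "x \<bullet> (laplacian n Es *\<^sub>v x) = x \<bullet> (transpose_mat ?A *\<^sub>v (?A *\<^sub>v x))"
    unfolding laplacian_def using A x by (simp add: assoc_mult_mat_vec[of _ n "length Es" _ n])
  also have "\<dots> = (?A *\<^sub>v x) \<bullet> (?A *\<^sub>v x)"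
  proof -
    have "(transpose_mat (transpose_mat ?A) *\<^sub>v x) \<bullet> (?A *\<^sub>v x) = x \<bullet> (transpose_mat ?A *\<^sub>v (?A *\<^sub>v x))"
      by (rule transpose_vec_mult_scalar[of _ n "length Es"]) (use A x in auto)
    thus ?thesis by simp
  qed
  also have "\<dots> = (\<Sum>r = 0..<length Es. (x $ fst (Es ! r) - x $ snd (Es ! r))^2)"
    using A x inc_mult[OF g x] by (simp add: scalar_prod_def power2_eq_square)
  finally show ?thesis .
qed

lemma lap_one:
  assumes g: "simple_graph n Es"
  shows "laplacian n Es *\<^sub>v Matrix.vec n (\<lambda>_. 1) = 0\<^sub>v n"
proof -
  let ?A = "incidence_mat n Es" and ?one = "Matrix.vec n (\<lambda>_. 1::real)"
  have A: "?A \<in> carrier_mat (length Es) n" by (rule inc_carrier)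
  have "?A *\<^sub>v ?one = 0\<^sub>v (length Es)"
  proof (intro eq_vecI)
    fix r assume "r < dim_vec (0\<^sub>v (length Es) :: real Matrix.vec)"
    hence r: "r < length Es" by simp
    hence "Es ! r \<in> set Es" by simp
    from edge_props[OF g this] show "(?A *\<^sub>v ?one) $ r = 0\<^sub>v (length Es) $ r"
      using inc_mult[OF g _ r, of ?one] r by simp
  qed (use A in auto)
  hence "laplacian n Es *\<^sub>v ?one = transpose_mat ?A *\<^sub>v 0\<^sub>v (length Es)"
    unfolding laplacian_def using A by (simp add: assoc_mult_mat_vec[of _ n "length Es" _ n])
  also have "\<dots> = 0\<^sub>v n" using mv_zero[of "transpose_mat ?A" n "length Es"] A by simp
  finally show ?thesis .
qed

lemma graph_rayleigh:
  assumes g: "simple_graph n Es" and n: "n > 0" and y0: "(\<Sum>i<n. y i) = 0"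
  shows "alg_conn n Es * (\<Sum>i<n. (y i)^2) \<le> (\<Sum>(i,j)\<leftarrow>Es. (y i - y j)^2)"
proof -
  let ?y = "Matrix.vec n y"
  have y: "?y \<in> carrier_vec n" by simp
  have y1: "?y \<bullet> Matrix.vec n (\<lambda>_. 1) = 0" using y0 by (simp add: scalar_prod_def lessThan_atLeast0)
  have psd: "\<And>x. x \<in> carrier_vec n \<Longrightarrow> x \<bullet> (laplacian n Es *\<^sub>v x) \<ge> 0"
    using lap_form[OF g] by (simp add: sum_nonneg)
  have "alg_conn n Es * (?y \<bullet> ?y) \<le> ?y \<bullet> (laplacian n Es *\<^sub>v ?y)"
    unfolding alg_conn_def
    by (rule rayleigh[OF lap_carrier lap_sym psd lap_one[OF g] n y y1])
  also have "?y \<bullet> (laplacian n Es *\<^sub>v ?y) = (\<Sum>r = 0..<length Es. (y (fst (Es ! r)) - y (snd (Es ! r)))^2)"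
    unfolding lap_form[OF g y] using edge_props[OF g] by (intro sum.cong) auto
  also have "\<dots> = (\<Sum>(i,j)\<leftarrow>Es. (y i - y j)^2)"
    by (simp add: sum_list_sum_nth case_prod_beta)
  also have "?y \<bullet> ?y = (\<Sum>i<n. (y i)^2)"
    by (simp add: scalar_prod_def lessThan_atLeast0 power2_eq_square)
  finally show ?thesis .
qed

lemma sum_if_single: "(i::nat) < n \<Longrightarrow> (\<Sum>k<n. if k = i then (c::real) else 0) = c"
proof -
  assume i: "i < n"
  have "(\<Sum>k<n. if k = i then c else 0) = (if i = i then c else 0) + (\<Sum>k\<in>{..<n}-{i}. if k = i then c else 0)"
    by (rule sum.remove) (use i in auto)
  also have "(\<Sum>k\<in>{..<n}-{i}. if k = i then c else 0) = 0" by (intro sum.neutral) auto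
  finally show ?thesis by simp
qed

lemma upd_sum:
  fixes h :: "real \<Rightarrow> real" and i j n :: nat
  assumes "i < n" "j < n" "i \<noteq> j"
  shows "(\<Sum>k<n. h ((x(i := a, j := b)) k)) = (\<Sum>k<n. h (x k)) + (h a - h (x i)) + (h b - h (x j))"
proof -
  have "(\<Sum>k<n. h ((x(i := a, j := b)) k)) - (\<Sum>k<n. h (x k)) = (\<Sum>k<n. h ((x(i := a, j := b)) k) - h (x k))"
    by (simp add: sum_subtractf)
  also have "\<dots> = (\<Sum>k<n. (if k = i then h a - h (x i) else 0) + (if k = j then h b - h (x j) else 0))"
    using assms by (intro sum.cong) auto
  also have "\<dots> = (h a - h (x i)) + (h b - h (x j))"
    using assms by (simp add: sum.distrib sum_if_single)
  finally show ?thesis by simp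
qed

lemma upd_change:
  assumes g: "simple_graph n Es" and e: "e \<in> set Es"
  shows "(\<Sum>k<n. (cb - upd Es x e k)^2) = (\<Sum>k<n. (cb - x k)^2) - 2 * step_size Es x * \<bar>x (fst e) - x (snd e)\<bar> + 2 * (step_size Es x)^2"
    and "(\<Sum>k<n. upd Es x e k) = (\<Sum>k<n. x k)"
proof -
  obtain i j where ij: "e = (i, j)" by (cases e)
  have p: "i < n" "j < n" "i \<noteq> j" using edge_props[OF g e] ij by auto
  let ?l = "step_size Es x" and ?F0 = "\<Sum>k<n. (cb - x k)^2"
  show "(\<Sum>k<n. (cb - upd Es x e k)^2) = (\<Sum>k<n. (cb - x k)^2) - 2 * ?l * \<bar>x (fst e) - x (snd e)\<bar> + 2 * ?l^2"
  proof (cases "x i < x j")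
    case True
    hence u: "upd Es x e = x(i := x i + ?l, j := x j - ?l)" unfolding upd_def ij Let_def by simp
    have "(\<Sum>k<n. (cb - (x(i := x i + ?l, j := x j - ?l)) k)^2) = ?F0 + ((cb - (x i + ?l))^2 - (cb - x i)^2) + ((cb - (x j - ?l))^2 - (cb - x j)^2)"
      by (rule upd_sum[OF p])
    thus ?thesis unfolding u using True by (simp add: ij abs_if power2_eq_square algebra_simps)
  next
    case False
    hence u: "upd Es x e = x(i := x i - ?l, j := x j + ?l)" unfolding upd_def ij Let_def by simp
    have "(\<Sum>k<n. (cb - (x(i := x i - ?l, j := x j + ?l)) k)^2) = ?F0 + ((cb - (x i - ?l))^2 - (cb - x i)^2) + ((cb - (x j + ?l))^2 - (cb - x j)^2)"
      by (rule upd_sum[OF p])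
    thus ?thesis unfolding u using False by (simp add: ij abs_if power2_eq_square algebra_simps)
  qed
  show "(\<Sum>k<n. upd Es x e k) = (\<Sum>k<n. x k)"
  proof (cases "x i < x j")
    case True
    hence u: "upd Es x e = x(i := x i + ?l, j := x j - ?l)" unfolding upd_def ij Let_def by simp
    show ?thesis unfolding u using upd_sum[OF p, of "\<lambda>t. t" x] by simp
  next
    case False
    hence u: "upd Es x e = x(i := x i - ?l, j := x j + ?l)" unfolding upd_def ij Let_def by simp
    show ?thesis unfolding u using upd_sum[OF p, of "\<lambda>t. t" x] by simp
  qed
qed

lemma step_exp:
  assumes g: "simple_graph n Es" and ne: "Es \<noteq> []"
  shows "measure_pmf.expectation (map_pmf (upd Es x) (pmf_of_set (set Es))) (\<lambda>y. \<Sum>k<n. (cb - y k)^2)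
     = (\<Sum>k<n. (cb - x k)^2) - 2 * (step_size Es x)^2"
proof -
  let ?l = "step_size Es x" and ?F = "\<Sum>k<n. (cb - x k)^2"
  let ?d = "\<lambda>e. \<bar>x (fst e) - x (snd e)\<bar>"
  have dist: "distinct Es" using g unfolding simple_graph_def by simp
  have card: "card (set Es) = length Es" using distinct_card[OF dist] .
  have m: "real (length Es) > 0" using ne by simp
  have sne: "set Es \<noteq> {}" using ne by simp
  have lsum: "(\<Sum>e\<in>set Es. ?d e) = 2 * real (length Es) * ?l"
  proof -
    have "(\<Sum>(i,j)\<leftarrow>Es. \<bar>x i - x j\<bar>) = (\<Sum>e\<in>set Es. ?d e)"
      using sum_list_distinct_conv_sum_set[OF dist, of "\<lambda>(i,j). \<bar>x i - x j\<bar>"]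
      by (simp add: case_prod_beta)
    thus ?thesis unfolding step_size_def using m by simp
  qed
  have "measure_pmf.expectation (map_pmf (upd Es x) (pmf_of_set (set Es))) (\<lambda>y. \<Sum>k<n. (cb - y k)^2)
      = (\<Sum>e\<in>set Es. \<Sum>k<n. (cb - upd Es x e k)^2) / real (length Es)"
    by (simp add: integral_map_pmf integral_pmf_of_set[OF sne] card)
  also have "(\<Sum>e\<in>set Es. \<Sum>k<n. (cb - upd Es x e k)^2) = (\<Sum>e\<in>set Es. ?F - 2 * ?l * ?d e + 2 * ?l^2)"
    using upd_change(1)[OF g] by (intro sum.cong) auto
  also have "\<dots> = real (length Es) * ?F - 2 * ?l * (\<Sum>e\<in>set Es. ?d e) + real (length Es) * 2 * ?l^2"
    by (simp add: sum.distrib sum_subtractf sum_distrib_left card)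
  also have "\<dots> = real (length Es) * (?F - 2 * ?l^2)"
    unfolding lsum by (simp add: algebra_simps power2_eq_square)
  finally show ?thesis using m by simp
qed

lemma sq_sum_ge:
  fixes a :: "'a \<Rightarrow> real"
  assumes "finite S" "\<And>e. e \<in> S \<Longrightarrow> a e \<ge> 0"
  shows "(\<Sum>e\<in>S. (a e)^2) \<le> (\<Sum>e\<in>S. a e)^2"
  using assms
proof (induction S rule: finite_induct)
  case (insert x F)
  have "0 \<le> a x * (\<Sum>e\<in>F. a e)" using insert.prems by (simp add: sum_nonneg)
  thus ?case using insert by (simp add: power2_eq_square algebra_simps)
qed simp

lemma alg_conn_le:
  assumes g: "simple_graph n Es" and n: "n \<ge> 2"
  shows "alg_conn n Es \<le> 2 * real (length Es)"
proof -
  define y0 where "y0 = (\<lambda>i::nat. (if i = 0 then 1 else 0) - (if i = 1 then 1 else (0::real)))"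
  have s0: "(\<Sum>i<n. y0 i) = 0" unfolding y0_def using n by (simp add: sum_subtractf sum_if_single)
  have sq: "(\<Sum>i<n. (y0 i)^2) = 2"
  proof -
    have "(\<Sum>i<n. (y0 i)^2) = (\<Sum>i<n. (if i = 0 then 1 else 0) + (if i = 1 then 1 else (0::real)))"
      by (intro sum.cong) (auto simp: y0_def)
    also have "\<dots> = 2" using n by (simp add: sum.distrib sum_if_single)
    finally show ?thesis .
  qed
  have "alg_conn n Es * 2 \<le> (\<Sum>(i,j)\<leftarrow>Es. (y0 i - y0 j)^2)"
    using graph_rayleigh[OF g _ s0] n sq by simp
  also have "\<dots> = (\<Sum>r = 0..<length Es. (y0 (fst (Es ! r)) - y0 (snd (Es ! r)))^2)"
    by (simp add: sum_list_sum_nth case_prod_beta)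
  also have "\<dots> \<le> (\<Sum>r = 0..<length Es. 4)"
  proof (rule sum_mono)
    fix r
    have b: "\<bar>y0 k\<bar> \<le> 1" for k unfolding y0_def by auto
    have "\<bar>y0 (fst (Es ! r)) - y0 (snd (Es ! r))\<bar> \<le> 2"
      using b[of "fst (Es ! r)"] b[of "snd (Es ! r)"] by linarith
    hence "\<bar>y0 (fst (Es ! r)) - y0 (snd (Es ! r))\<bar>^2 \<le> 2^2" by (intro power_mono) auto
    thus "(y0 (fst (Es ! r)) - y0 (snd (Es ! r)))^2 \<le> 4" by simp
  qed
  finally show ?thesis by simp
qed

lemma one_step_bound:
  assumes g: "simple_graph n Es" and n: "n \<ge> 2" and ne: "Es \<noteq> []"
    and xs: "(\<Sum>i<n. x i) = real n * cb"
  shows "measure_pmf.expectation (map_pmf (upd Es x) (pmf_of_set (set Es))) (\<lambda>y. \<Sum>k<n. (cb - y k)^2)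
     \<le> (1 - alg_conn n Es / (2 * (real (length Es))^2)) * (\<Sum>k<n. (cb - x k)^2)"
proof -
  let ?l = "step_size Es x" and ?F = "\<Sum>k<n. (cb - x k)^2" and ?m = "real (length Es)"
  let ?\<alpha> = "alg_conn n Es"
  have dist: "distinct Es" using g unfolding simple_graph_def by simp
  have m: "?m > 0" using ne by simp
  define y where "y = (\<lambda>i. x i - cb)"
  have y0: "(\<Sum>i<n. y i) = 0" unfolding y_def using xs by (simp add: sum_subtractf)
  have Fy: "(\<Sum>i<n. (y i)^2) = ?F" unfolding y_def by (intro sum.cong) (auto simp: power2_commute)
  have "?\<alpha> * ?F \<le> (\<Sum>(i,j)\<leftarrow>Es. (y i - y j)^2)"
    using graph_rayleigh[OF g _ y0] n Fy by simp
  also have "\<dots> = (\<Sum>e\<in>set Es. \<bar>x (fst e) - x (snd e)\<bar>^2)"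
    using sum_list_distinct_conv_sum_set[OF dist, of "\<lambda>(i,j). (y i - y j)^2"]
    by (simp add: case_prod_beta y_def)
  also have "\<dots> \<le> (\<Sum>e\<in>set Es. \<bar>x (fst e) - x (snd e)\<bar>)^2"
    by (rule sq_sum_ge) auto
  also have "(\<Sum>e\<in>set Es. \<bar>x (fst e) - x (snd e)\<bar>) = 2 * ?m * ?l"
  proof -
    have "(\<Sum>(i,j)\<leftarrow>Es. \<bar>x i - x j\<bar>) = (\<Sum>e\<in>set Es. \<bar>x (fst e) - x (snd e)\<bar>)"
      using sum_list_distinct_conv_sum_set[OF dist, of "\<lambda>(i,j). \<bar>x i - x j\<bar>"]
      by (simp add: case_prod_beta)
    thus ?thesis unfolding step_size_def using m by simp
  qed
  finally have key: "?\<alpha> * ?F \<le> 4 * ?m^2 * ?l^2" by (simp add: power2_eq_square algebra_simps)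
  have "?\<alpha> * ?F / (2 * ?m^2) \<le> 2 * ?l^2"
    using key m by (simp add: field_simps power2_eq_square)
  hence "?F - 2 * ?l^2 \<le> (1 - ?\<alpha> / (2 * ?m^2)) * ?F"
    by (simp add: algebra_simps)
  thus ?thesis using step_exp[OF g ne, of x cb] by simp
qed

theorem mainTheorem19:
  fixes n :: nat and Es :: "(nat \<times> nat) list" and c :: "nat \<Rightarrow> real" and k :: nat
  assumes "n \<ge> 2"
    and "simple_graph n Es"
    and "graph_connected n Es"
  defines "m \<equiv> length Es"
    and "cbar \<equiv> (\<Sum>i<n. c i) / real n"
  shows "measure_pmf.expectation (iterate Es c k) (\<lambda>x. \<Sum>i<n. (cbar - x i)\<^sup>2)
           \<le> (1 - alg_conn n Es / (2 * (real m)\<^sup>2)) ^ k * (\<Sum>i<n. (cbar - c i)\<^sup>2)"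
proof -
  have n: "n \<ge> 2" and g: "simple_graph n Es" and conn: "graph_connected n Es" by fact+
  have ne: "Es \<noteq> []"
  proof
    assume "Es = []"
    hence all: "\<forall>i<n. \<forall>j<n. i = j" using conn unfolding graph_connected_def by simp
    show False using all[rule_format, of 0 1] n by simp
  qed
  have mpos: "real m > 0" unfolding m_def using ne by simp
  define f where "f = (\<lambda>x::nat \<Rightarrow> real. \<Sum>i<n. (cbar - x i)\<^sup>2)"
  define \<rho> where "\<rho> = 1 - alg_conn n Es / (2 * (real m)\<^sup>2)"
  have f0: "f x \<ge> 0" for x unfolding f_def by (simp add: sum_nonneg)
  have rho0: "\<rho> \<ge> 0"
  proof -
    have a: "alg_conn n Es \<le> 2 * real m" using alg_conn_le[OF g n] unfolding m_def .
    have "real m \<ge> 1" using ne unfolding m_def by (cases Es) auto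
    hence "2 * real m \<le> 2 * (real m)\<^sup>2" by (simp add: power2_eq_square)
    hence "alg_conn n Es \<le> 2 * (real m)\<^sup>2" using a by linarith
    thus ?thesis unfolding \<rho>_def using mpos by (simp add: field_simps)
  qed
  have ncb: "(\<Sum>i<n. c i) = real n * cbar" unfolding cbar_def using n by simp
  let ?U = "pmf_of_set (set Es)"
  have sne: "set Es \<noteq> {}" using ne by simp
  have inv: "finite (set_pmf (iterate Es c t)) \<and> (\<forall>x\<in>set_pmf (iterate Es c t). (\<Sum>i<n. x i) = (\<Sum>i<n. c i))" for t
  proof (induction t)
    case 0
    then show ?case by simp
  next
    case (Suc t)
    have s: "set_pmf (iterate Es c (Suc t)) = (\<Union>x\<in>set_pmf (iterate Es c t). upd Es x ` set Es)"
      using sne by (simp add: set_bind_pmf)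
    show ?case unfolding s using Suc upd_change(2)[OF g] by auto
  qed
  have step: "measure_pmf.expectation (map_pmf (upd Es x) ?U) f \<le> \<rho> * f x"
    if "x \<in> set_pmf (iterate Es c t)" for x t
  proof -
    have "(\<Sum>i<n. x i) = real n * cbar" using inv[of t] that ncb by auto
    from one_step_bound[OF g n ne this] show ?thesis unfolding f_def \<rho>_def m_def .
  qed
  have "measure_pmf.expectation (iterate Es c t) f \<le> \<rho> ^ t * f c" for t
  proof (induction t)
    case 0
    show ?case using integral_measure_pmf_real[of "{c}" "return_pmf c" f] by simp
  next
    case (Suc t)
    let ?p = "iterate Es c t" and ?A = "set_pmf (iterate Es c t)"
    have fin: "finite ?A" using inv[of t] by simp
    have "measure_pmf.expectation (iterate Es c (Suc t)) f
        = (\<Sum>a\<in>?A. pmf ?p a *\<^sub>R measure_pmf.expectation (map_pmf (upd Es a) ?U) f)"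
      unfolding iterate.simps(2) by (rule pmf_expectation_bind[OF fin]) (use sne in auto)
    also have "\<dots> \<le> (\<Sum>a\<in>?A. pmf ?p a * (\<rho> * f a))"
      using step by (auto intro!: sum_mono mult_left_mono)
    also have "\<dots> = \<rho> * (\<Sum>a\<in>?A. f a * pmf ?p a)"
      by (simp add: sum_distrib_left algebra_simps)
    also have "(\<Sum>a\<in>?A. f a * pmf ?p a) = measure_pmf.expectation ?p f"
      by (rule integral_measure_pmf_real[symmetric]) (use fin in auto)
    also have "\<rho> * \<dots> \<le> \<rho> * (\<rho> ^ t * f c)" using Suc rho0 by (rule mult_left_mono)
    finally show ?case by simp
  qed
  thus ?thesis unfolding f_def \<rho>_def .
qed

end
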